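(* Let $0\le b<d\le n$ be integers and fix a homological degree. (1) If $\hat z$ is a relative cycle of $\hat K(b,d]$ whose boundary $\partial\hat z$ contains $\sigma\times\{b\}$ with $\min\sigma=b$, then $[\hat z]\notin\operatorname{im}\big(H(\hat K(b-1,d])\to H(\hat K(b,d])\big)$. (2) If $\hat z$ is a relative cycle of $\hat K[b,d)$ whose boundary $\partial\hat z$ contains $\sigma\times\{d\}$ with $\max\sigma=d$, then $[\hat z]\notin\operatorname{im}\big(H(\hat K[b,d+1))\to H(\hat K[b,d))\big)$. (3) If $\hat z$ is a relative cycle of $\hat K(b,d)$ whose boundary $\partial\hat z$ contains $\sigma\times\{b\}$ with $\min\sigma=b$ and $\tau\times\{d\}$ with $\max\tau=d$, then $[\hat z]\notin\operatorname{im}\big(H(\hat K(b-1,d))\to H(\hat K(b,d))\big)$ and $[\hat z]\notin\operatorname{im}\big(H(\hat K(b,d+1))\to H(\hat K(b,d))\big)$.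
   Context: Fix a field $\mathbb F$; all chains and homology groups have coefficients in $\mathbb F$. Let $n\ge 1$ and let $K$ be a finite $\Delta$-complex (distinct simplices may have the same boundary) in which every simplex $\sigma$ carries an integer interval $T(\sigma)=[\min\sigma,\max\sigma]\subseteq[0,n]$ with $\min\sigma<\max\sigma$, such that for each integer $i$ the set $K_i=\{\sigma: i\in T(\sigma)\}$ is a subcomplex (these form a zigzag $K_0\to K_1\leftarrow K_2\to\cdots$), and such that whenever $\sigma$ is a proper face of $\tau$ we have $\min\sigma<\min\tau<\max\tau<\max\sigma$. The prism $\hat K$ is the cell complex whose cells are the vertical cells $\sigma\times\{i\}$ for $\sigma\in K$ and integers $i\in T(\sigma)$ (of dimension $\dim\sigma$) and the horizontal cells $\sigma\times[i,i+1]$ for integers $i$ with $[i,i+1]\subseteq T(\sigma)$ (of dimension $\dim\sigma+1$), with boundary $\partial(\sigma\times\{i\})=(\partial\sigma)\times\{i\}$ and $\partial(\sigma\times[i,i+1])=(\partial\sigma)\times[i,i+1]+(-1)^{\dim\sigma}(\sigma\times\{i+1\}-\sigma\times\{i\})$ (terms not in $\hat K$ do not occur). For integers $i\le j$, $\hat K_i^j$ is the subcomplex of cells $\sigma\times T$ with $T\subseteq[i,j]$; so $\hat K_{-1}^{n+1}=\hat K$. For integers $b\le d$ define the pairs $\hat K[b,d]=(\hat K_b^d,\emptyset)$, $\hat K(b,d]=(\hat K_{-1}^d,\hat K_{-1}^b)$, $\hat K[b,d)=(\hat K_b^{n+1},\hat K_d^{n+1})$, $\hat K(b,d)=(\hat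 K,\hat K_{-1}^b\cup\hat K_d^{n+1})$, and write $H(\cdot)$ for their relative homology; maps between these groups are induced by inclusions of pairs. A relative cycle of a pair $(X,A)$ is a chain in $X$ whose boundary lies in $A$. A chain "contains" a cell if the cell's coefficient is nonzero. *)

theory Defs
  imports Main
begin

definition delta_complex :: "'s set \<Rightarrow> ('s \<Rightarrow> nat) \<Rightarrow> ('s \<Rightarrow> nat \<Rightarrow> 's) \<Rightarrow> bool" where
  "delta_complex K dim face \<longleftrightarrow> finite K \<and>
     (\<forall>s\<in>K. \<forall>j. 0 < dim s \<and> j \<le> dim s \<longrightarrow> face s j \<in> K \<and> dim (face s j) = dim s - 1) \<and>
     (\<forall>s\<in>K. \<forall>i j. 1 < dim s \<and> i < j \<and> j \<le> dim s \<longrightarrow>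
        face (face s j) i = face (face s i) (j - 1))"

text \<open>The filtered (zigzag) complex: each simplex s carries T(s) = [mn s, mx s] within [0,n],
  mn s < mx s, each K_i is a subcomplex, and for every (immediate, hence every iterated)
  proper face r of t: mn r < mn t < mx t < mx r.\<close>

definition zz_complex :: "'s set \<Rightarrow> ('s \<Rightarrow> nat) \<Rightarrow> ('s \<Rightarrow> nat \<Rightarrow> 's) \<Rightarrow> ('s \<Rightarrow> int) \<Rightarrow> ('s \<Rightarrow> int) \<Rightarrow> int \<Rightarrow> bool" where
  "zz_complex K dim face mn mx n \<longleftrightarrow> 1 \<le> n \<and> delta_complex K dim face \<and>
     (\<forall>s\<in>K. 0 \<le> mn s \<and> mn s < mx s \<and> mx s \<le> n) \<and>
     (\<forall>s\<in>K. \<forall>j i. 0 < dim s \<and> j \<le> dim s \<and> mn s \<le> i \<and> i \<le> mx s \<longrightarrow>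
        mn (face s j) \<le> i \<and> i \<le> mx (face s j)) \<and>
     (\<forall>s\<in>K. \<forall>j. 0 < dim s \<and> j \<le> dim s \<longrightarrow>
        mn (face s j) < mn s \<and> mn s < mx s \<and> mx s < mx (face s j))"

text \<open>Cells of the prism: V s i = s x {i}, Hc s i = s x [i,i+1].\<close>
datatype 's cell = V 's int | Hc 's int

definition prism :: "'s set \<Rightarrow> ('s \<Rightarrow> int) \<Rightarrow> ('s \<Rightarrow> int) \<Rightarrow> 's cell set" where
  "prism K mn mx = {V s i |s i. s \<in> K \<and> mn s \<le> i \<and> i \<le> mx s}
                 \<union> {Hc s i |s i. s \<in> K \<and> mn s \<le> i \<and> i + 1 \<le> mx s}"

definition cdim :: "('s \<Rightarrow> nat) \<Rightarrow> 's cell \<Rightarrow> nat" where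
  "cdim dim c = (case c of V s i \<Rightarrow> dim s | Hc s i \<Rightarrow> dim s + 1)"

text \<open>Subcomplex hat K_i^j: cells s x T with T contained in [i,j].\<close>
definition sub_prism :: "'s set \<Rightarrow> ('s \<Rightarrow> int) \<Rightarrow> ('s \<Rightarrow> int) \<Rightarrow> int \<Rightarrow> int \<Rightarrow> 's cell set" where
  "sub_prism K mn mx i j = {c \<in> prism K mn mx.
     (case c of V s k \<Rightarrow> i \<le> k \<and> k \<le> j | Hc s k \<Rightarrow> i \<le> k \<and> k + 1 \<le> j)}"

definition simp_bd :: "('s \<Rightarrow> nat) \<Rightarrow> ('s \<Rightarrow> nat \<Rightarrow> 's) \<Rightarrow> ('s \<Rightarrow> int \<Rightarrow> 's cell) \<Rightarrow> 's \<Rightarrow> int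
    \<Rightarrow> 's cell \<Rightarrow> 'f::field" where
  "simp_bd dim face C s i = (\<lambda>x. if dim s = 0 then 0 else
      (\<Sum>j\<in>{0..dim s}. if C (face s j) i = x then (-1) ^ j else 0))"

definition cell_bd :: "('s \<Rightarrow> nat) \<Rightarrow> ('s \<Rightarrow> nat \<Rightarrow> 's) \<Rightarrow> 's cell \<Rightarrow> 's cell \<Rightarrow> 'f::field" where
  "cell_bd dim face c = (case c of
      V s i \<Rightarrow> simp_bd dim face V s i
    | Hc s i \<Rightarrow> (\<lambda>x. simp_bd dim face Hc s i x + (-1) ^ dim s *
          ((if x = V s (i + 1) then 1 else 0) - (if x = V s i then 1 else 0))))"

definition chain_bd :: "'s set \<Rightarrow> ('s \<Rightarrow> nat) \<Rightarrow> ('s \<Rightarrow> nat \<Rightarrow> 's) \<Rightarrow> ('s \<Rightarrow> int) \<Rightarrow> ('s \<Rightarrow> int)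
    \<Rightarrow> ('s cell \<Rightarrow> 'f::field) \<Rightarrow> 's cell \<Rightarrow> 'f" where
  "chain_bd K dim face mn mx z = (\<lambda>x. \<Sum>c\<in>prism K mn mx. z c * cell_bd dim face c x)"

definition is_chain :: "('s \<Rightarrow> nat) \<Rightarrow> 's cell set \<Rightarrow> nat \<Rightarrow> ('s cell \<Rightarrow> 'f::field) \<Rightarrow> bool" where
  "is_chain dim S p z \<longleftrightarrow> (\<forall>c. z c \<noteq> 0 \<longrightarrow> c \<in> S \<and> cdim dim c = p)"

definition rel_cycle :: "'s set \<Rightarrow> ('s \<Rightarrow> nat) \<Rightarrow> ('s \<Rightarrow> nat \<Rightarrow> 's) \<Rightarrow> ('s \<Rightarrow> int) \<Rightarrow> ('s \<Rightarrow> int)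
    \<Rightarrow> 's cell set \<Rightarrow> 's cell set \<Rightarrow> nat \<Rightarrow> ('s cell \<Rightarrow> 'f::field) \<Rightarrow> bool" where
  "rel_cycle K dim face mn mx X A p z \<longleftrightarrow> is_chain dim X p z \<and>
     (\<forall>c. chain_bd K dim face mn mx z c \<noteq> 0 \<longrightarrow> c \<in> A)"

definition homologous :: "'s set \<Rightarrow> ('s \<Rightarrow> nat) \<Rightarrow> ('s \<Rightarrow> nat \<Rightarrow> 's) \<Rightarrow> ('s \<Rightarrow> int) \<Rightarrow> ('s \<Rightarrow> int)
    \<Rightarrow> 's cell set \<Rightarrow> 's cell set \<Rightarrow> nat \<Rightarrow> ('s cell \<Rightarrow> 'f::field) \<Rightarrow> ('s cell \<Rightarrow> 'f) \<Rightarrow> bool" where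
  "homologous K dim face mn mx X A p z z' \<longleftrightarrow>
     (\<exists>a w. is_chain dim A p a \<and> is_chain dim X (p + 1) w \<and>
        (\<forall>c. z c - z' c = a c + chain_bd K dim face mn mx w c))"

text \<open>The class [z] in H_p(X,A) lies in the image of the map H_p(X',A') -> H_p(X,A)
  induced by the inclusion of pairs (X',A') into (X,A).\<close>
definition in_image :: "'s set \<Rightarrow> ('s \<Rightarrow> nat) \<Rightarrow> ('s \<Rightarrow> nat \<Rightarrow> 's) \<Rightarrow> ('s \<Rightarrow> int) \<Rightarrow> ('s \<Rightarrow> int)
    \<Rightarrow> 's cell set \<Rightarrow> 's cell set \<Rightarrow> 's cell set \<Rightarrow> 's cell set \<Rightarrow> nat \<Rightarrow> ('s cell \<Rightarrow> 'f::field) \<Rightarrow> bool" where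
  "in_image K dim face mn mx X' A' X A p z \<longleftrightarrow>
     (\<exists>z'. rel_cycle K dim face mn mx X' A' p z' \<and> homologous K dim face mn mx X A p z z')"

end

theory Submission imports Defs begin

lemma zz_face:
  assumes "zz_complex K dim face mn mx n" "t \<in> K" "0 < dim t" "j \<le> dim t"
  shows "mn (face t j) < mn t" "mx t < mx (face t j)"
  using assms unfolding zz_complex_def by auto

lemma zz_bounds:
  assumes "zz_complex K dim face mn mx n" "t \<in> K"
  shows "0 \<le> mn t" "mx t \<le> n"
  using assms unfolding zz_complex_def by auto

lemma prism_finite:
  assumes "zz_complex K dim face mn mx n"
  shows "finite (prism K mn mx)"
proof -
  have fK: "finite K" using assms unfolding zz_complex_def delta_complex_def by auto
  have "prism K mn mx \<subseteq> (\<lambda>(s,i). V s i) ` (K \<times> {0..n}) \<union> (\<lambda>(s,i). Hc s i) ` (K \<times> {0..n})"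
  proof
    fix c assume "c \<in> prism K mn mx"
    then show "c \<in> (\<lambda>(s,i). V s i) ` (K \<times> {0..n}) \<union> (\<lambda>(s,i). Hc s i) ` (K \<times> {0..n})"
      unfolding prism_def using zz_bounds[OF assms] by fastforce
  qed
  moreover have "finite ((\<lambda>(s,i). V s i) ` (K \<times> {0..n}) \<union> (\<lambda>(s,i). Hc s i) ` (K \<times> {0..n}))"
    using fK by auto
  ultimately show ?thesis by (rule finite_subset)
qed

lemma simp_bd_V_H [simp]: "simp_bd dim face V t i (Hc s b) = 0"
  unfolding simp_bd_def by simp
lemma simp_bd_H_V [simp]: "simp_bd dim face Hc t i (V s b) = 0"
  unfolding simp_bd_def by simp

lemma cellV_left:
  assumes zz: "zz_complex K dim face mn mx n" and s: "s \<in> K" "mn s = b"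
    and c: "c \<in> prism K mn mx"
  shows "(cell_bd dim face c (V s b) :: 'f::field) = (if c = Hc s b then - ((-1) ^ dim s) else 0)"
proof (cases c)
  case (V t i)
  with c have t: "t \<in> K" "mn t \<le> i" unfolding prism_def by auto
  have ne: "\<And>j. 0 < dim t \<Longrightarrow> j \<le> dim t \<Longrightarrow> \<not> (face t j = s \<and> i = b)"
    using zz_face[OF zz t(1)] t s by force
  have "simp_bd dim face V t i (V s b) = (0::'f)"
    unfolding simp_bd_def using ne by (auto intro!: sum.neutral)
  then show ?thesis using V unfolding cell_bd_def by simp
next
  case (Hc t i)
  with c have t: "t \<in> K" "mn t \<le> i" unfolding prism_def by auto
  show ?thesis using Hc t s unfolding cell_bd_def by auto
qed

lemma cellH_left:
  assumes zz: "zz_complex K dim face mn mx n" and s: "s \<in> K" "mn s = b"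
    and c: "c \<in> prism K mn mx"
  shows "(cell_bd dim face c (Hc s b) :: 'f::field) = 0"
proof (cases c)
  case (V t i)
  then show ?thesis unfolding cell_bd_def by simp
next
  case (Hc t i)
  with c have t: "t \<in> K" "mn t \<le> i" unfolding prism_def by auto
  have ne: "\<And>j. 0 < dim t \<Longrightarrow> j \<le> dim t \<Longrightarrow> \<not> (face t j = s \<and> i = b)"
    using zz_face[OF zz t(1)] t s by force
  have "simp_bd dim face Hc t i (Hc s b) = (0::'f)"
    unfolding simp_bd_def using ne by (auto intro!: sum.neutral)
  then show ?thesis using Hc unfolding cell_bd_def by simp
qed

lemma cellV_right:
  assumes zz: "zz_complex K dim face mn mx n" and s: "s \<in> K" "mx s = d"
    and c: "c \<in> prism K mn mx"
  shows "(cell_bd dim face c (V s d) :: 'f::field) = (if c = Hc s (d - 1) then (-1) ^ dim s else 0)"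
proof (cases c)
  case (V t i)
  with c have t: "t \<in> K" "i \<le> mx t" unfolding prism_def by auto
  have ne: "\<And>j. 0 < dim t \<Longrightarrow> j \<le> dim t \<Longrightarrow> \<not> (face t j = s \<and> i = d)"
    using zz_face[OF zz t(1)] t s by force
  have "simp_bd dim face V t i (V s d) = (0::'f)"
    unfolding simp_bd_def using ne by (auto intro!: sum.neutral)
  then show ?thesis using V unfolding cell_bd_def by simp
next
  case (Hc t i)
  with c have t: "t \<in> K" "i + 1 \<le> mx t" unfolding prism_def by auto
  show ?thesis using Hc t s unfolding cell_bd_def by auto
qed

lemma cellH_right:
  assumes zz: "zz_complex K dim face mn mx n" and s: "s \<in> K" "mx s = d"
    and c: "c \<in> prism K mn mx"
  shows "(cell_bd dim face c (Hc s (d - 1)) :: 'f::field) = 0"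
proof (cases c)
  case (V t i)
  then show ?thesis unfolding cell_bd_def by simp
next
  case (Hc t i)
  with c have t: "t \<in> K" "i + 1 \<le> mx t" unfolding prism_def by auto
  have ne: "\<And>j. 0 < dim t \<Longrightarrow> j \<le> dim t \<Longrightarrow> \<not> (face t j = s \<and> i = d - 1)"
    using zz_face[OF zz t(1)] t s by force
  have "simp_bd dim face Hc t i (Hc s (d - 1)) = (0::'f)"
    unfolding simp_bd_def using ne by (auto intro!: sum.neutral)
  then show ?thesis using Hc unfolding cell_bd_def by simp
qed

lemma bdV_left:
  assumes zz: "zz_complex K dim face mn mx n" and s: "s \<in> K" "mn s = b"
  shows "chain_bd K dim face mn mx (y :: _ \<Rightarrow> 'f::field) (V s b) =
     (if Hc s b \<in> prism K mn mx then y (Hc s b) * - ((-1) ^ dim s) else 0)"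
proof -
  have "chain_bd K dim face mn mx y (V s b) =
     (\<Sum>c\<in>prism K mn mx. if c = Hc s b then y c * - ((-1) ^ dim s) else 0)"
    unfolding chain_bd_def by (rule sum.cong) (auto simp: cellV_left[OF zz s])
  also have "\<dots> = (if Hc s b \<in> prism K mn mx then y (Hc s b) * - ((-1) ^ dim s) else 0)"
    using prism_finite[OF zz] by (simp add: sum.delta)
  finally show ?thesis .
qed

lemma bdV_right:
  assumes zz: "zz_complex K dim face mn mx n" and s: "s \<in> K" "mx s = d"
  shows "chain_bd K dim face mn mx (y :: _ \<Rightarrow> 'f::field) (V s d) =
     (if Hc s (d - 1) \<in> prism K mn mx then y (Hc s (d - 1)) * ((-1) ^ dim s) else 0)"
proof -
  have "chain_bd K dim face mn mx y (V s d) =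
     (\<Sum>c\<in>prism K mn mx. if c = Hc s (d - 1) then y c * ((-1) ^ dim s) else 0)"
    unfolding chain_bd_def by (rule sum.cong) (auto simp: cellV_right[OF zz s])
  also have "\<dots> = (if Hc s (d - 1) \<in> prism K mn mx then y (Hc s (d - 1)) * ((-1) ^ dim s) else 0)"
    using prism_finite[OF zz] by (simp add: sum.delta)
  finally show ?thesis .
qed

lemma bdH_left:
  assumes zz: "zz_complex K dim face mn mx n" and s: "s \<in> K" "mn s = b"
  shows "chain_bd K dim face mn mx (y :: _ \<Rightarrow> 'f::field) (Hc s b) = 0"
  unfolding chain_bd_def by (rule sum.neutral) (simp add: cellH_left[OF zz s])

lemma bdH_right:
  assumes zz: "zz_complex K dim face mn mx n" and s: "s \<in> K" "mx s = d"
  shows "chain_bd K dim face mn mx (y :: _ \<Rightarrow> 'f::field) (Hc s (d - 1)) = 0"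
  unfolding chain_bd_def by (rule sum.neutral) (simp add: cellH_right[OF zz s])


lemma generic_left:
  assumes zz: "zz_complex K dim face mn mx n" and s: "s \<in> K" "mn s = b"
    and bd: "chain_bd K dim face mn mx (z :: _ \<Rightarrow> 'f::field) (V s b) \<noteq> 0"
    and nA': "V s b \<notin> A'" and nA: "Hc s b \<notin> A"
  shows "\<not> in_image K dim face mn mx X' A' X A p z"
proof
  assume "in_image K dim face mn mx X' A' X A p z"
  then obtain z' a w where rc': "rel_cycle K dim face mn mx X' A' p z'"
    and a: "is_chain dim A p a" and eq: "\<And>c. z c - z' c = a c + chain_bd K dim face mn mx w c"
    unfolding in_image_def homologous_def by blast
  from bd have P: "Hc s b \<in> prism K mn mx" and zH: "z (Hc s b) \<noteq> 0"
    by (auto simp: bdV_left[OF zz s] split: if_splits)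
  have "chain_bd K dim face mn mx z' (V s b) = 0" using rc' nA' unfolding rel_cycle_def by blast
  then have z'H: "z' (Hc s b) = 0" by (simp add: bdV_left[OF zz s] P)
  have aH: "a (Hc s b) = 0" using a nA unfolding is_chain_def by blast
  have "z (Hc s b) = 0" using eq[of "Hc s b"] z'H aH bdH_left[OF zz s] by simp
  with zH show False by simp
qed

lemma generic_right:
  assumes zz: "zz_complex K dim face mn mx n" and s: "s \<in> K" "mx s = d"
    and bd: "chain_bd K dim face mn mx (z :: _ \<Rightarrow> 'f::field) (V s d) \<noteq> 0"
    and nA': "V s d \<notin> A'" and nA: "Hc s (d - 1) \<notin> A"
  shows "\<not> in_image K dim face mn mx X' A' X A p z"
proof
  assume "in_image K dim face mn mx X' A' X A p z"
  then obtain z' a w where rc': "rel_cycle K dim face mn mx X' A' p z'"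
    and a: "is_chain dim A p a" and eq: "\<And>c. z c - z' c = a c + chain_bd K dim face mn mx w c"
    unfolding in_image_def homologous_def by blast
  from bd have P: "Hc s (d - 1) \<in> prism K mn mx" and zH: "z (Hc s (d - 1)) \<noteq> 0"
    by (auto simp: bdV_right[OF zz s] split: if_splits)
  have "chain_bd K dim face mn mx z' (V s d) = 0" using rc' nA' unfolding rel_cycle_def by blast
  then have z'H: "z' (Hc s (d - 1)) = 0" by (simp add: bdV_right[OF zz s] P)
  have aH: "a (Hc s (d - 1)) = 0" using a nA unfolding is_chain_def by blast
  have "z (Hc s (d - 1)) = 0" using eq[of "Hc s (d - 1)"] z'H aH bdH_right[OF zz s] by simp
  with zH show False by simp
qed

theorem lemma5p2:
  fixes K :: "'s set" and dim :: "'s \<Rightarrow> nat" and face :: "'s \<Rightarrow> nat \<Rightarrow> 's"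
    and mn mx :: "'s \<Rightarrow> int" and n b d :: int and p :: nat
  assumes "zz_complex K dim face mn mx n"
    and "0 \<le> b" and "b < d" and "d \<le> n"
  shows
   "(\<forall>(z :: 's cell \<Rightarrow> 'f::field) s.
      rel_cycle K dim face mn mx (sub_prism K mn mx (-1) d) (sub_prism K mn mx (-1) b) p z \<and>
      s \<in> K \<and> mn s = b \<and> chain_bd K dim face mn mx z (V s b) \<noteq> 0 \<longrightarrow>
      \<not> in_image K dim face mn mx
          (sub_prism K mn mx (-1) d) (sub_prism K mn mx (-1) (b - 1))
          (sub_prism K mn mx (-1) d) (sub_prism K mn mx (-1) b) p z)
  \<and> (\<forall>(z :: 's cell \<Rightarrow> 'f::field) s.
      rel_cycle K dim face mn mx (sub_prism K mn mx b (n + 1)) (sub_prism K mn mx d (n + 1)) p z \<and>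
      s \<in> K \<and> mx s = d \<and> chain_bd K dim face mn mx z (V s d) \<noteq> 0 \<longrightarrow>
      \<not> in_image K dim face mn mx
          (sub_prism K mn mx b (n + 1)) (sub_prism K mn mx (d + 1) (n + 1))
          (sub_prism K mn mx b (n + 1)) (sub_prism K mn mx d (n + 1)) p z)
  \<and> (\<forall>(z :: 's cell \<Rightarrow> 'f::field) s t.
      rel_cycle K dim face mn mx (prism K mn mx)
        (sub_prism K mn mx (-1) b \<union> sub_prism K mn mx d (n + 1)) p z \<and>
      s \<in> K \<and> mn s = b \<and> chain_bd K dim face mn mx z (V s b) \<noteq> 0 \<and>
      t \<in> K \<and> mx t = d \<and> chain_bd K dim face mn mx z (V t d) \<noteq> 0 \<longrightarrow>
      \<not> in_image K dim face mn mx
          (prism K mn mx) (sub_prism K mn mx (-1) (b - 1) \<union> sub_prism K mn mx d (n + 1))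
          (prism K mn mx) (sub_prism K mn mx (-1) b \<union> sub_prism K mn mx d (n + 1)) p z
    \<and> \<not> in_image K dim face mn mx
          (prism K mn mx) (sub_prism K mn mx (-1) b \<union> sub_prism K mn mx (d + 1) (n + 1))
          (prism K mn mx) (sub_prism K mn mx (-1) b \<union> sub_prism K mn mx d (n + 1)) p z)"
  proof (intro conjI allI impI)
  fix z :: "'s cell \<Rightarrow> 'f::field" and s
  assume h: "rel_cycle K dim face mn mx (sub_prism K mn mx (-1) d) (sub_prism K mn mx (-1) b) p z \<and>
      s \<in> K \<and> mn s = b \<and> chain_bd K dim face mn mx z (V s b) \<noteq> 0"
  show "\<not> in_image K dim face mn mx
          (sub_prism K mn mx (-1) d) (sub_prism K mn mx (-1) (b - 1))
          (sub_prism K mn mx (-1) d) (sub_prism K mn mx (-1) b) p z"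
    by (rule generic_left[OF assms(1)]) (use h in \<open>auto simp: sub_prism_def\<close>)
next
  fix z :: "'s cell \<Rightarrow> 'f::field" and s
  assume h: "rel_cycle K dim face mn mx (sub_prism K mn mx b (n + 1)) (sub_prism K mn mx d (n + 1)) p z \<and>
      s \<in> K \<and> mx s = d \<and> chain_bd K dim face mn mx z (V s d) \<noteq> 0"
  show "\<not> in_image K dim face mn mx
          (sub_prism K mn mx b (n + 1)) (sub_prism K mn mx (d + 1) (n + 1))
          (sub_prism K mn mx b (n + 1)) (sub_prism K mn mx d (n + 1)) p z"
    by (rule generic_right[OF assms(1)]) (use h in \<open>auto simp: sub_prism_def\<close>)
next
  fix z :: "'s cell \<Rightarrow> 'f::field" and s t
  assume h: "rel_cycle K dim face mn mx (prism K mn mx)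
        (sub_prism K mn mx (-1) b \<union> sub_prism K mn mx d (n + 1)) p z \<and>
      s \<in> K \<and> mn s = b \<and> chain_bd K dim face mn mx z (V s b) \<noteq> 0 \<and>
      t \<in> K \<and> mx t = d \<and> chain_bd K dim face mn mx z (V t d) \<noteq> 0"
  show "\<not> in_image K dim face mn mx
          (prism K mn mx) (sub_prism K mn mx (-1) (b - 1) \<union> sub_prism K mn mx d (n + 1))
          (prism K mn mx) (sub_prism K mn mx (-1) b \<union> sub_prism K mn mx d (n + 1)) p z"
    by (rule generic_left[OF assms(1), where s=s]) (use h assms(3) in \<open>auto simp: sub_prism_def\<close>)
  show "\<not> in_image K dim face mn mx
          (prism K mn mx) (sub_prism K mn mx (-1) b \<union> sub_prism K mn mx (d + 1) (n + 1))
          (prism K mn mx) (sub_prism K mn mx (-1) b \<union> sub_prism K mn mx d (n + 1)) p z"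
    by (rule generic_right[OF assms(1), where s=t]) (use h assms(3) in \<open>auto simp: sub_prism_def\<close>)
qed

end
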